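(* Assume the identifiability condition: for $C_1,C_2\in\Theta^2$, $G_{C_1}=G_{C_2}$ if and only if $C_1=C_2$. Assume moreover that for every $C_0\in\Theta^2$, $$\inf\Big\{\rho(G_{C_0},G_{C_e}) : C_e\in\Theta^2,\ \exists x\in\mathbf X \text{ with } M_{C_e}(x)\neq M_{C_0}(x)\Big\}>0,$$ where $\rho$ is the Prohorov metric. Then there exists an allocation rule $\{\phi_\tau\}$ such that for every $C_0\in\Theta^2$, $\lim_{t\to\infty}\mathsf E_{C_0}\{T_{inf}(t)\}<\infty$ and $\lim_{t\to\infty}T_{inf}(t)<\infty$ $\mathsf P_{C_0}$-almost surely.
   Context: Two-armed bandit with side observations. $\Theta\subset\mathbb R$ is a parameter set and $\mathbf X\subset\mathbb R$. Known families: distributions $\{G_C\}_{C\in\Theta^2}$ on $\mathbf X$ and conditional distributions $\{F_\theta(dy\mid x)\}_{\theta\in\Theta}$ on $\mathbb R$. Under the (unknown) configuration $C_0=(\theta_1,\theta_2)\in\Theta^2$, the side observations $X_1,X_2,\dots$ are i.i.d. with law $G_{C_0}$, and for each arm $i\in\{1,2\}$ the pairs $(X_t,Y^i_t)$ are i.i.d. in $t$ with joint law $G_{C_0}(dx)F_{\theta_i}(dy\mid x)$ ($Y^i_t$ is the reward of arm $i$ at time $t$). An allocation rule is a sequence $\phi_t\in\{1,2\}$ where $\phi_t$ depends only on $X_1,\dots,X_t$ and the previously observed rewards $Y^{\phi_\tau}_\tau$, $\tau<t$. $\mathsf P_C,\mathsf E_C$ denote probability/expectation under configuration $C$. Write $1(C)=\theta_1$,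 $2(C)=\theta_2$ for $C=(\theta_1,\theta_2)$; $\mu_\theta(x)=\int y\,F_\theta(dy\mid x)$ (assumed finite); $M_C(x)=\arg\max_{i\in\{1,2\}}\mu_{i(C)}(x)$ is the preferred arm. The inferior sampling time is $T_{inf}(t)=\sum_{\tau=1}^t 1\{\phi_\tau\neq M_{C_0}(X_\tau)\}$. The Prohorov metric on distributions on $\mathbb R$ is $\rho(P,Q)=\inf\{\epsilon>0: P(A)\le Q(A^\epsilon)+\epsilon \text{ for all closed } A\subset\mathbb R\}$, where $A^\epsilon=\{x:\inf_{y\in A}|x-y|<\epsilon\}$. *)

theory Defs
  imports "HOL-Probability.Probability"
begin

definition prohorov :: "real measure \<Rightarrow> real measure \<Rightarrow> real" where
  "prohorov P Q = Inf {\<epsilon>. \<epsilon> > 0 \<and>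
     (\<forall>A. closed A \<longrightarrow> measure P A \<le> measure Q {x. \<exists>y\<in>A. \<bar>x - y\<bar> < \<epsilon>} + \<epsilon>)}"

definition mu :: "(real \<Rightarrow> real \<Rightarrow> real measure) \<Rightarrow> real \<Rightarrow> real \<Rightarrow> real" where
  "mu F \<theta> x = (\<integral>y. y \<partial>(F \<theta> x))"

definition pref_arm :: "(real \<Rightarrow> real \<Rightarrow> real measure) \<Rightarrow> real \<times> real \<Rightarrow> real \<Rightarrow> nat" where
  "pref_arm F C x = (if mu F (fst C) x \<ge> mu F (snd C) x then 1 else 2)"

text \<open>Conditional law used off the side-observation set (irrelevant, G is concentrated on Xs).\<close>
definition Fk :: "real set \<Rightarrow> (real \<Rightarrow> real \<Rightarrow> real measure) \<Rightarrow> real \<Rightarrow> real \<Rightarrow> real measure" where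
  "Fk Xs F \<theta> x = (if x \<in> Xs then F \<theta> x else return borel 0)"

definition step_law :: "real set \<Rightarrow> (real \<times> real \<Rightarrow> real measure) \<Rightarrow> (real \<Rightarrow> real \<Rightarrow> real measure)
    \<Rightarrow> real \<times> real \<Rightarrow> (real \<times> real \<times> real) measure" where
  "step_law Xs G F C = G C \<bind> (\<lambda>x. distr (Fk Xs F (fst C) x \<Otimes>\<^sub>M Fk Xs F (snd C) x) borel
                                        (\<lambda>(y1, y2). (x, y1, y2)))"

definition Omega :: "real set \<Rightarrow> (real \<times> real \<Rightarrow> real measure) \<Rightarrow> (real \<Rightarrow> real \<Rightarrow> real measure)
    \<Rightarrow> real \<times> real \<Rightarrow> (nat \<Rightarrow> real \<times> real \<times> real) measure" where
  "Omega Xs G F C = PiM UNIV (\<lambda>_::nat. step_law Xs G F C)"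

definition reward :: "real \<times> real \<times> real \<Rightarrow> nat \<Rightarrow> real" where
  "reward s a = (if a = 1 then fst (snd s) else snd (snd s))"

text \<open>An allocation rule: phi t xs ys is the arm pulled at time t, given the side observations
  xs 0, ..., xs t and the previously observed rewards ys 0, ..., ys (t-1).\<close>
definition allocation_rule :: "(nat \<Rightarrow> (nat \<Rightarrow> real) \<Rightarrow> (nat \<Rightarrow> real) \<Rightarrow> nat) \<Rightarrow> bool" where
  "allocation_rule phi \<longleftrightarrow>
     (\<forall>t xs ys. phi t xs ys \<in> {1, 2}) \<and>
     (\<forall>t xs ys xs' ys'. (\<forall>i\<le>t. xs i = xs' i) \<and> (\<forall>i<t. ys i = ys' i)
                        \<longrightarrow> phi t xs ys = phi t xs' ys') \<and>
     (\<forall>t. (\<lambda>(xs, ys). phi t xs ys) \<in>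
            (PiM UNIV (\<lambda>_::nat. borel) \<Otimes>\<^sub>M PiM UNIV (\<lambda>_::nat. borel)) \<rightarrow>\<^sub>M count_space UNIV)"

primrec acts_upto :: "(nat \<Rightarrow> (nat \<Rightarrow> real) \<Rightarrow> (nat \<Rightarrow> real) \<Rightarrow> nat) \<Rightarrow> (nat \<Rightarrow> real \<times> real \<times> real)
    \<Rightarrow> nat \<Rightarrow> nat list" where
  "acts_upto phi \<omega> 0 = []"
| "acts_upto phi \<omega> (Suc n) =
     (let as = acts_upto phi \<omega> n
      in as @ [phi n (\<lambda>i. fst (\<omega> i)) (\<lambda>i. if i < n then reward (\<omega> i) (as ! i) else 0)])"

definition action :: "(nat \<Rightarrow> (nat \<Rightarrow> real) \<Rightarrow> (nat \<Rightarrow> real) \<Rightarrow> nat) \<Rightarrow> (nat \<Rightarrow> real \<times> real \<times> real)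
    \<Rightarrow> nat \<Rightarrow> nat" where
  "action phi \<omega> t = acts_upto phi \<omega> (Suc t) ! t"

definition T_inf :: "(real \<Rightarrow> real \<Rightarrow> real measure) \<Rightarrow> real \<times> real
    \<Rightarrow> (nat \<Rightarrow> (nat \<Rightarrow> real) \<Rightarrow> (nat \<Rightarrow> real) \<Rightarrow> nat) \<Rightarrow> nat \<Rightarrow> (nat \<Rightarrow> real \<times> real \<times> real) \<Rightarrow> nat" where
  "T_inf F C0 phi t \<omega> = card {\<tau>. \<tau> < t \<and> action phi \<omega> \<tau> \<noteq> pref_arm F C0 (fst (\<omega> \<tau>))}"

end

theory Submission
  imports Defs
begin

definition thick :: "real set \<Rightarrow> real \<Rightarrow> real set" where
  "thick B r = {x. \<exists>y\<in>B. \<bar>x - y\<bar> < r}"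

lemma open_thick: "open (thick B r)"
proof -
  have "thick B r = (\<Union>y\<in>B. ball y r)"
    by (auto simp: thick_def dist_real_def abs_minus_commute)
  then show ?thesis by auto
qed

lemma thick_borel: "thick B r \<in> sets borel"
  using open_thick by (rule borel_open)

lemma thick_mono_r: "r \<le> s \<Longrightarrow> thick B r \<subseteq> thick B s"
  by (force simp: thick_def)

lemma thick_thick: "thick (thick B r) s \<subseteq> thick B (r + s)"
  unfolding thick_def by (smt (verit, best) mem_Collect_eq subsetI)

lemma thick_compl: "thick (- thick A r) r \<subseteq> - A"
  unfolding thick_def by (auto simp: abs_minus_commute) (metis abs_minus_commute)

definition rd :: "nat \<Rightarrow> real \<Rightarrow> int" where "rd n x = floor (x * real (Suc n))"
definition dat :: "nat \<Rightarrow> (nat \<Rightarrow> real) \<Rightarrow> int list" where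
  "dat n xs = map (\<lambda>i. rd n (xs i)) [0..<Suc n]"
definition empL :: "nat \<Rightarrow> int list \<Rightarrow> real set \<Rightarrow> real" where
  "empL n l B = (\<Sum>i<length l. indicator B (real_of_int (l!i) / real (Suc n))) / real (length l)"
definition Sfit :: "(real \<times> real \<Rightarrow> real measure) \<Rightarrow> real \<times> real \<Rightarrow> nat \<Rightarrow> int list \<Rightarrow> real \<Rightarrow> bool" where
  "Sfit G C n l b \<longleftrightarrow> (\<forall>B. empL n l B \<le> measure (G C) (thick B b) + b)"
definition goodj :: "real set \<Rightarrow> (real \<times> real \<Rightarrow> real measure) \<Rightarrow> nat \<Rightarrow> int list \<Rightarrow> nat set" where
  "goodj Theta G n l = {j\<in>{1..n}. \<exists>C\<in>Theta\<times>Theta. Sfit G C n l (1 / real j)}"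
definition Chat :: "real set \<Rightarrow> (real \<times> real \<Rightarrow> real measure) \<Rightarrow> nat \<Rightarrow> int list \<Rightarrow> real \<times> real" where
  "Chat Theta G n l = (SOME C. C \<in> Theta\<times>Theta \<and> Sfit G C n l (1 / real (Max (goodj Theta G n l))))"

lemma empL_compl:
  assumes "length l > 0"
  shows "empL n l (- X) = 1 - empL n l X"
proof -
  have "(\<Sum>i<length l. indicator (- X) (real_of_int (l!i) / real (Suc n)) :: real)
      = (\<Sum>i<length l. 1 - indicator X (real_of_int (l!i) / real (Suc n)))"
    by (intro sum.cong) (auto simp: indicator_def)
  also have "\<dots> = real (length l) - (\<Sum>i<length l. indicator X (real_of_int (l!i) / real (Suc n)))"
    by (simp add: sum_subtractf)
  finally show ?thesis using assms by (simp add: empL_def diff_divide_distrib)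
qed

lemma empL_nonneg: "empL n l X \<ge> 0"
  unfolding empL_def by (intro divide_nonneg_nonneg sum_nonneg) auto

lemma core:
  assumes C0: "C0 \<in> Theta \<times> Theta"
    and Gp: "\<And>C. C \<in> Theta \<times> Theta \<Longrightarrow> prob_space (G C) \<and> sets (G C) = sets borel"
    and J: "1 \<le> J" "J \<le> n" and fit: "Sfit G C0 n l (1 / real J)" and len: "length l > 0"
  shows "goodj Theta G n l \<noteq> {} \<and> Chat Theta G n l \<in> Theta \<times> Theta \<and>
         prohorov (G C0) (G (Chat Theta G n l)) \<le> 2 / real J"
proof -
  define c where "c = 1 / real J"
  have c: "c > 0" using J by (simp add: c_def)
  have Jin: "J \<in> goodj Theta G n l" using J fit C0 unfolding goodj_def c_def by auto
  have fin: "finite (goodj Theta G n l)" unfolding goodj_def by auto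
  define jm where "jm = Max (goodj Theta G n l)"
  have jm: "jm \<in> goodj Theta G n l" "J \<le> jm"
    using Jin fin unfolding jm_def by (auto intro: Max_in Max_ge)
  then obtain C where "C \<in> Theta \<times> Theta" "Sfit G C n l (1 / real jm)"
    unfolding goodj_def by auto
  then have ch: "Chat Theta G n l \<in> Theta \<times> Theta \<and> Sfit G (Chat Theta G n l) n l (1 / real jm)"
    unfolding Chat_def jm_def[symmetric] by (metis (mono_tags, lifting) someI)
  define Ch where "Ch = Chat Theta G n l"
  define b where "b = 1 / real jm"
  have b: "b > 0" "b \<le> c" using jm J by (auto simp: b_def c_def goodj_def frac_le)
  interpret P0: prob_space "G C0" using Gp C0 by auto
  interpret P1: prob_space "G Ch" using Gp ch by (auto simp: Ch_def)
  have s0: "sets (G C0) = sets borel" using Gp C0 by auto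
  have s1: "sets (G Ch) = sets borel" using Gp ch by (auto simp: Ch_def)
  have key: "measure (G C0) A \<le> measure (G Ch) (thick A (2 * c)) + 2 * c" if A: "closed A" for A
  proof -
    have Ab: "A \<in> sets borel" using A by (rule borel_closed)
    have "empL n l (- thick A c) \<le> measure (G C0) (thick (- thick A c) c) + c"
      using fit unfolding Sfit_def c_def by blast
    also have "measure (G C0) (thick (- thick A c) c) \<le> measure (G C0) (- A)"
      using thick_compl[of A c] Ab s0 thick_borel
      by (intro P0.finite_measure_mono) auto
    also have "measure (G C0) (- A) = 1 - measure (G C0) A"
      using P0.prob_compl[of A] Ab s0 sets_eq_imp_space_eq[OF s0] by (simp add: Compl_eq_Diff_UNIV)
    finally have 1: "measure (G C0) A \<le> empL n l (thick A c) + c"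
      using empL_compl[OF len] by simp
    have "empL n l (thick A c) \<le> measure (G Ch) (thick (thick A c) b) + b"
      using ch unfolding Sfit_def Ch_def b_def by blast
    also have "measure (G Ch) (thick (thick A c) b) \<le> measure (G Ch) (thick A (2 * c))"
      using thick_thick[of A c b] thick_mono_r[of "c + b" "2*c" A] b s1 thick_borel
      by (intro P1.finite_measure_mono) auto
    finally show ?thesis using 1 b by linarith
  qed
  have "prohorov (G C0) (G Ch) \<le> 2 * c"
    unfolding prohorov_def
  proof (rule cInf_lower)
    show "2 * c \<in> {\<epsilon>. \<epsilon> > 0 \<and> (\<forall>A. closed A \<longrightarrow> measure (G C0) A \<le> measure (G Ch) {x. \<exists>y\<in>A. \<bar>x - y\<bar> < \<epsilon>} + \<epsilon>)}"
      using key c unfolding thick_def by auto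
    show "bdd_below {\<epsilon>. \<epsilon> > 0 \<and> (\<forall>A. closed A \<longrightarrow> measure (G C0) A \<le> measure (G Ch) {x. \<exists>y\<in>A. \<bar>x - y\<bar> < \<epsilon>} + \<epsilon>)}"
      by (rule bdd_belowI[of _ 0]) auto
  qed
  then show ?thesis using Jin ch by (auto simp: Ch_def c_def)
qed

lemma rd_bounds:
  "real_of_int (rd n x) / real (Suc n) \<le> x \<and> x < real_of_int (rd n x) / real (Suc n) + 1 / real (Suc n)"
proof -
  have a: "real_of_int (rd n x) \<le> x * real (Suc n)" "x * real (Suc n) < real_of_int (rd n x) + 1"
    unfolding rd_def by linarith+
  have p: "real (Suc n) > 0" by simp
  from a p show ?thesis
    by (simp add: field_simps)
qed

lemma conc_det:
  fixes w eta :: real and N n :: nat and xs :: "nat \<Rightarrow> real" and G0 :: "real measure"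
  assumes G0: "prob_space G0" "sets G0 = sets borel"
    and w: "w > 0" and h: "1 / real (Suc n) \<le> w"
    and outsmall: "measure G0 {x. floor (x / w) \<notin> {- int N..int N}} \<le> w"
    and eta: "real (2*N+2) * eta \<le> w" "eta \<ge> 0"
    and cells: "\<And>j. j \<in> {- int N..int N} \<Longrightarrow>
        (\<Sum>i\<in>{..n}. indicator {x. floor (x / w) = j} (xs i)) / real (Suc n)
          < measure G0 {x. floor (x / w) = j} + eta"
    and outc: "(\<Sum>i\<in>{..n}. indicator {x. floor (x / w) \<notin> {- int N..int N}} (xs i)) / real (Suc n)
          < measure G0 {x. floor (x / w) \<notin> {- int N..int N}} + eta"
  shows "empL n (dat n xs) B \<le> measure G0 (thick B (2 * w)) + 2 * w"
proof -
  interpret P: prob_space G0 by fact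
  define K where "K = {- int N..int N}"
  define cell where "cell = (\<lambda>j::int. {x::real. floor (x / w) = j})"
  define out where "out = {x::real. floor (x / w) \<notin> K}"
  define p where "p = (\<lambda>i. real_of_int (rd n (xs i)) / real (Suc n))"
  define T where "T = {j\<in>K. \<exists>x\<in>cell j. x \<in> thick B (1 / real (Suc n))}"
  have TK: "T \<subseteq> K" and finK: "finite K" unfolding T_def K_def by auto
  have finT: "finite T" using finite_subset[OF TK finK] .
  have cardK: "card K = 2 * N + 1" unfolding K_def by simp
  have cardT: "card T \<le> 2 * N + 1" using card_mono[OF finK TK] cardK by simp
  have cell_borel: "cell j \<in> sets borel" for j unfolding cell_def by measurable
  have out_borel: "out \<in> sets borel" unfolding out_def by measurable
  have pw: "indicator B (p i) \<le> (\<Sum>j\<in>T. indicator (cell j) (xs i)) + (indicator out (xs i) :: real)" for i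
  proof (cases "p i \<in> B")
    case False
    then show ?thesis by (simp add: sum_nonneg)
  next
    case True
    have "\<bar>xs i - p i\<bar> < 1 / real (Suc n)" using rd_bounds[of n "xs i"] unfolding p_def by auto
    then have th: "xs i \<in> thick B (1 / real (Suc n))" using True unfolding thick_def by auto
    define j where "j = floor (xs i / w)"
    show ?thesis
    proof (cases "j \<in> K")
      case True
      then have jT: "j \<in> T" using th unfolding T_def cell_def j_def by auto
      have "indicator (cell j) (xs i) \<le> (\<Sum>j\<in>T. indicator (cell j) (xs i) :: real)"
        using finT by (intro member_le_sum[OF jT]) auto
      moreover have "indicator (cell j) (xs i) = (1::real)" unfolding cell_def j_def by simp
      moreover have "indicator out (xs i) \<ge> (0::real)" by simp
      moreover have "indicator B (p i) = (1::real)" using \<open>p i \<in> B\<close> by simp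
      ultimately show ?thesis by linarith
    next
      case False
      then have "indicator out (xs i) = (1::real)" unfolding out_def j_def by simp
      then show ?thesis using \<open>p i \<in> B\<close> by (simp add: sum_nonneg)
    qed
  qed
  have len: "length (dat n xs) = Suc n" by (simp add: dat_def)
  have nth: "i < Suc n \<Longrightarrow> dat n xs ! i = rd n (xs i)" for i
    by (simp add: dat_def del: upt_Suc)
  have "empL n (dat n xs) B = (\<Sum>i<Suc n. indicator B (p i)) / real (Suc n)"
    unfolding empL_def len p_def by (simp add: nth)
  also have "(\<Sum>i<Suc n. indicator B (p i)) \<le> (\<Sum>i<Suc n. (\<Sum>j\<in>T. indicator (cell j) (xs i)) + (indicator out (xs i) :: real))"
    by (intro sum_mono pw)
  also have "\<dots> = (\<Sum>j\<in>T. (\<Sum>i\<in>{..n}. indicator (cell j) (xs i))) + (\<Sum>i\<in>{..n}. indicator out (xs i))"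
    by (simp add: sum.distrib lessThan_Suc_atMost sum.swap[of _ T])
  finally have "empL n (dat n xs) B \<le> (\<Sum>j\<in>T. (\<Sum>i\<in>{..n}. indicator (cell j) (xs i)) / real (Suc n)) + (\<Sum>i\<in>{..n}. indicator out (xs i)) / real (Suc n)"
    by (simp add: divide_right_mono add_divide_distrib sum_divide_distrib)
  also have "\<dots> \<le> (\<Sum>j\<in>T. measure G0 (cell j) + eta) + (measure G0 out + eta)"
    using cells outc TK unfolding cell_def out_def K_def
    by (intro add_mono sum_mono less_imp_le) auto
  also have "(\<Sum>j\<in>T. measure G0 (cell j) + eta) = measure G0 (\<Union>j\<in>T. cell j) + real (card T) * eta"
  proof -
    have "measure G0 (\<Union>j\<in>T. cell j) = (\<Sum>j\<in>T. measure G0 (cell j))"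
    proof (rule P.finite_measure_finite_Union)
      show "finite T" by (rule finT)
      show "cell ` T \<subseteq> sets G0" using cell_borel G0(2) by blast
      show "disjoint_family_on cell T" unfolding disjoint_family_on_def cell_def by blast
    qed
    then show ?thesis by (simp add: sum.distrib)
  qed
  also have "measure G0 (\<Union>j\<in>T. cell j) \<le> measure G0 (thick B (2 * w))"
  proof (intro P.finite_measure_mono)
    show "thick B (2 * w) \<in> sets G0" using G0(2) thick_borel by simp
    show "(\<Union>j\<in>T. cell j) \<subseteq> thick B (2 * w)"
    proof safe
      fix j x assume jT: "j \<in> T" and x: "x \<in> cell j"
      then obtain z y where z: "z \<in> cell j" "y \<in> B" "\<bar>z - y\<bar> < 1 / real (Suc n)"
        unfolding T_def thick_def by auto
      have "floor (x / w) = floor (z / w)" using x z(1) unfolding cell_def by simp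
      then have "\<bar>x / w - z / w\<bar> < 1" by linarith
      then have "\<bar>x - z\<bar> < w" using w by (simp add: diff_divide_distrib[symmetric] abs_divide field_simps)
      then have "\<bar>x - y\<bar> < 2 * w" using z h by linarith
      then show "x \<in> thick B (2 * w)" using z unfolding thick_def by auto
    qed
  qed
  finally have a: "empL n (dat n xs) B \<le> measure G0 (thick B (2 * w)) + real (card T) * eta + (measure G0 out + eta)" by simp
    have "real (card T) * eta + eta \<le> real (2*N+2) * eta"
    proof -
      have "real (card T) + 1 \<le> real (2*N+2)" using cardT by linarith
      then have "(real (card T) + 1) * eta \<le> real (2*N+2) * eta" using eta(2) by (rule mult_right_mono)
      then show ?thesis by (simp add: distrib_right)
    qed
    then show ?thesis using a outsmall eta unfolding out_def K_def by linarith
qed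

lemma Fk_meas:
  assumes Xs: "Xs \<in> sets borel" and F: "(\<lambda>x. F \<theta> x) \<in> restrict_space borel Xs \<rightarrow>\<^sub>M prob_algebra borel"
  shows "(\<lambda>x. Fk Xs F \<theta> x) \<in> borel \<rightarrow>\<^sub>M prob_algebra borel"
proof -
  have "(\<lambda>x. if x \<in> Xs then F \<theta> x else return borel 0) \<in> borel \<rightarrow>\<^sub>M prob_algebra borel"
  proof (subst measurable_If_restrict_space_iff)
    show "{x \<in> space borel. x \<in> Xs} \<in> sets borel" using Xs by simp
    show "(\<lambda>x. F \<theta> x) \<in> restrict_space borel {x. x \<in> Xs} \<rightarrow>\<^sub>M prob_algebra borel \<and>
          (\<lambda>x. return borel 0) \<in> restrict_space borel {x. x \<notin> Xs} \<rightarrow>\<^sub>M prob_algebra borel"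
      using F by (auto intro!: measurable_const simp: space_prob_algebra prob_space_return)
  qed
  then show ?thesis unfolding Fk_def .
qed

definition kern :: "real set \<Rightarrow> (real \<Rightarrow> real \<Rightarrow> real measure) \<Rightarrow> real \<times> real \<Rightarrow> real \<Rightarrow> (real \<times> real \<times> real) measure" where
  "kern Xs F C x = distr (Fk Xs F (fst C) x \<Otimes>\<^sub>M Fk Xs F (snd C) x) borel (\<lambda>(y1, y2). (x, y1, y2))"

lemma kern_meas:
  assumes Xs: "Xs \<in> sets borel"
    and F1: "(\<lambda>x. F (fst C) x) \<in> restrict_space borel Xs \<rightarrow>\<^sub>M prob_algebra borel"
    and F2: "(\<lambda>x. F (snd C) x) \<in> restrict_space borel Xs \<rightarrow>\<^sub>M prob_algebra borel"
  shows "kern Xs F C \<in> borel \<rightarrow>\<^sub>M prob_algebra borel"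
proof -
  have k1[measurable]: "(\<lambda>x. Fk Xs F (fst C) x) \<in> borel \<rightarrow>\<^sub>M prob_algebra borel" by (rule Fk_meas[where F=F and \<theta>="fst C", OF Xs F1])
  have k2[measurable]: "(\<lambda>x. Fk Xs F (snd C) x) \<in> borel \<rightarrow>\<^sub>M prob_algebra borel" by (rule Fk_meas[where F=F and \<theta>="snd C", OF Xs F2])
  have pp: "(\<lambda>x. Fk Xs F (fst C) x \<Otimes>\<^sub>M Fk Xs F (snd C) x) \<in> borel \<rightarrow>\<^sub>M prob_algebra (borel \<Otimes>\<^sub>M borel)"
    by measurable
  have ff: "(\<lambda>(x, y). (\<lambda>(y1, y2). (x, y1, y2)) y) \<in> (borel :: real measure) \<Otimes>\<^sub>M (borel \<Otimes>\<^sub>M borel) \<rightarrow>\<^sub>M (borel :: (real \<times> real \<times> real) measure)"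
  proof -
    have "(\<lambda>(x, y). (\<lambda>(y1, y2). (x, y1, y2)) y) = (\<lambda>p::real \<times> real \<times> real. p)" by auto
    moreover have "(\<lambda>p::real \<times> real \<times> real. p) \<in> (borel :: real measure) \<Otimes>\<^sub>M (borel \<Otimes>\<^sub>M borel) \<rightarrow>\<^sub>M borel"
      by (simp add: measurable_pair_iff borel_prod[symmetric] cong: measurable_cong_sets)
    ultimately show ?thesis by simp
  qed
  show ?thesis unfolding kern_def
    by (rule measurable_distr_prob_space2[OF pp ff])
qed

lemma step_law_kern: "step_law Xs G F C = G C \<bind> kern Xs F C"
  unfolding step_law_def kern_def ..

lemma step_law_facts:
  assumes Xs: "Xs \<in> sets borel"
    and G: "prob_space (G C)" "sets (G C) = sets borel"
    and F1: "(\<lambda>x. F (fst C) x) \<in> restrict_space borel Xs \<rightarrow>\<^sub>M prob_algebra borel"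
    and F2: "(\<lambda>x. F (snd C) x) \<in> restrict_space borel Xs \<rightarrow>\<^sub>M prob_algebra borel"
  shows "prob_space (step_law Xs G F C)" "sets (step_law Xs G F C) = sets borel"
    "distr (step_law Xs G F C) borel fst = G C"
proof -
  have K: "kern Xs F C \<in> borel \<rightarrow>\<^sub>M prob_algebra borel" by (rule kern_meas[OF Xs F1 F2])
  have GC: "G C \<in> space (prob_algebra borel)" using G by (simp add: space_prob_algebra)
  show ps: "prob_space (step_law Xs G F C)" unfolding step_law_kern by (rule prob_space_bind'[OF GC K])
  show ss: "sets (step_law Xs G F C) = sets borel" unfolding step_law_kern by (rule sets_bind'[OF GC K])
  show "distr (step_law Xs G F C) borel fst = G C"
  proof (rule measure_eqI)
    show "sets (distr (step_law Xs G F C) borel fst) = sets (G C)" using G by simp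
    fix A assume A: "A \<in> sets (distr (step_law Xs G F C) borel fst)"
    then have Ab: "A \<in> sets borel" by simp
    have sp: "space (step_law Xs G F C) = UNIV" using sets_eq_imp_space_eq[OF ss] by simp
    have AU: "A \<times> UNIV \<in> sets (borel :: (real \<times> real \<times> real) measure)"
    proof -
      have "A \<times> UNIV \<in> sets ((borel :: real measure) \<Otimes>\<^sub>M (borel :: (real \<times> real) measure))"
        using Ab pair_measureI[of A borel "UNIV :: (real \<times> real) set" borel] by simp
      then show ?thesis by (subst (asm) borel_prod)
    qed
    have "emeasure (distr (step_law Xs G F C) borel fst) A = emeasure (step_law Xs G F C) (A \<times> UNIV)"
    proof -
      have fm: "fst \<in> step_law Xs G F C \<rightarrow>\<^sub>M (borel :: real measure)"
        using ss by (simp cong: measurable_cong_sets add: borel_measurable_continuous_onI continuous_on_fst continuous_on_id)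
      show ?thesis using Ab by (subst emeasure_distr[OF fm]) (auto simp: sp vimage_fst)
    qed
    also have "\<dots> = (\<integral>\<^sup>+x. emeasure (kern Xs F C x) (A \<times> UNIV) \<partial>G C)"
      unfolding step_law_kern using AU by (intro emeasure_bind_prob_algebra[OF GC K])
    also have "\<dots> = (\<integral>\<^sup>+x. indicator A x \<partial>G C)"
    proof (intro nn_integral_cong)
      fix x
      have P1: "prob_space (Fk Xs F (fst C) x)" and P2: "prob_space (Fk Xs F (snd C) x)"
        using measurable_space[OF Fk_meas[where F=F and \<theta>="fst C", OF Xs F1], of x] measurable_space[OF Fk_meas[where F=F and \<theta>="snd C", OF Xs F2], of x]
        by (auto simp: space_prob_algebra)
      interpret PP: pair_prob_space "Fk Xs F (fst C) x" "Fk Xs F (snd C) x"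
        using P1 P2 by (simp add: pair_prob_space_def pair_sigma_finite_def prob_space_imp_sigma_finite)
      have meas: "(\<lambda>(y1, y2). (x, y1, y2)) \<in> Fk Xs F (fst C) x \<Otimes>\<^sub>M Fk Xs F (snd C) x \<rightarrow>\<^sub>M (borel :: (real \<times> real \<times> real) measure)"
      proof -
        have s1: "sets (Fk Xs F (fst C) x) = sets borel" "sets (Fk Xs F (snd C) x) = sets borel"
          using measurable_space[OF Fk_meas[where F=F and \<theta>="fst C", OF Xs F1], of x] measurable_space[OF Fk_meas[where F=F and \<theta>="snd C", OF Xs F2], of x]
          by (auto simp: space_prob_algebra)
        have "sets (Fk Xs F (fst C) x \<Otimes>\<^sub>M Fk Xs F (snd C) x) = sets (borel :: (real \<times> real) measure)"
          using s1 by (simp add: borel_prod[symmetric] cong: sets_pair_measure_cong)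
        moreover have "(\<lambda>y::real \<times> real. (x, y)) \<in> borel \<rightarrow>\<^sub>M (borel :: (real \<times> real \<times> real) measure)"
          by (intro borel_measurable_continuous_onI continuous_intros)
        moreover have "(\<lambda>(y1, y2). (x, y1, y2)) = (\<lambda>y::real \<times> real. (x, y))" by auto
        ultimately show ?thesis by (simp cong: measurable_cong_sets)
      qed
      have "emeasure (kern Xs F C x) (A \<times> UNIV) =
            emeasure (Fk Xs F (fst C) x \<Otimes>\<^sub>M Fk Xs F (snd C) x) ((\<lambda>(y1, y2). (x, y1, y2)) -` (A \<times> UNIV) \<inter> space (Fk Xs F (fst C) x \<Otimes>\<^sub>M Fk Xs F (snd C) x))"
        unfolding kern_def using AU by (intro emeasure_distr meas)
      also have "\<dots> = indicator A x"
        by (cases "x \<in> A") (auto simp: PP.emeasure_space_1)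
      finally show "emeasure (kern Xs F C x) (A \<times> UNIV) = indicator A x" .
    qed
    also have "\<dots> = emeasure (G C) A" using Ab G by simp
    finally show "emeasure (distr (step_law Xs G F C) borel fst) A = emeasure (G C) A" .
  qed
qed

lemma coord_indep:
  fixes S :: "'a measure"
  assumes S: "prob_space S"
  shows "prob_space.indep_vars (PiM UNIV (\<lambda>_::nat. S)) (\<lambda>_. S) (\<lambda>i \<omega>. \<omega> i) {..n}"
proof -
  interpret PS: product_prob_space "\<lambda>_::nat. S" UNIV
    using S by (simp add: product_prob_space_def product_prob_space_axioms_def product_sigma_finite_def prob_space_imp_sigma_finite)
  have Pmps: "prob_space (PiM UNIV (\<lambda>_::nat. S))" using S by (intro prob_space_PiM)
  have rv: "(\<lambda>\<omega>. \<omega> i) \<in> PiM UNIV (\<lambda>_::nat. S) \<rightarrow>\<^sub>M S" for i by simp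
  have "distr (PiM UNIV (\<lambda>_::nat. S)) (PiM {..n} (\<lambda>_. S)) (\<lambda>x. \<lambda>i\<in>{..n}. x i) = PiM {..n} (\<lambda>_. S)"
    using PS.distr_PiM_restrict_finite[of "{..n}"] by (simp add: restrict_def)
  also have "\<dots> = PiM {..n} (\<lambda>i. distr (PiM UNIV (\<lambda>_::nat. S)) S (\<lambda>\<omega>. \<omega> i))"
    using PS.PiM_component by (intro PiM_cong) auto
  finally show ?thesis
    by (subst prob_space.indep_vars_iff_distr_eq_PiM'[OF Pmps]) (use rv in auto)
qed

lemma hoeff_bound:
  fixes S :: "(real \<times> real \<times> real) measure" and D :: "real set" and G0 :: "real measure"
  assumes S: "prob_space S" "sets S = sets borel" and Sfst: "distr S borel fst = G0"
    and D: "D \<in> sets borel" and eta: "eta \<ge> 0"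
  shows "measure (PiM UNIV (\<lambda>_::nat. S)) {\<omega> \<in> space (PiM UNIV (\<lambda>_::nat. S)).
            (\<Sum>i\<in>{..n}. indicator D (fst (\<omega> i))) / real (card {..n}) \<ge> measure G0 D + eta}
         \<le> exp (- 2 * real (card {..n}) * eta\<^sup>2 / (1 - 0)\<^sup>2)"
proof -
  interpret PS: product_prob_space "\<lambda>_::nat. S" UNIV
    using S by (simp add: product_prob_space_def product_prob_space_axioms_def product_sigma_finite_def prob_space_imp_sigma_finite)
  have Pmps: "prob_space (PiM UNIV (\<lambda>_::nat. S))" using S(1) by (intro prob_space_PiM)
  define M where "M = PiM UNIV (\<lambda>_::nat. S)"
  define X where "X = (\<lambda>(i::nat) (\<omega>::nat \<Rightarrow> real \<times> real \<times> real). indicator D (fst (\<omega> i)) :: real)"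
  have fstm: "fst \<in> S \<rightarrow>\<^sub>M (borel :: real measure)"
    using S(2) by (simp cong: measurable_cong_sets add: borel_measurable_continuous_onI continuous_on_fst continuous_on_id)
  have im: "(\<lambda>s. indicator D (fst s) :: real) \<in> S \<rightarrow>\<^sub>M borel"
    using fstm D by measurable
  have Xm: "X i \<in> M \<rightarrow>\<^sub>M borel" for i
    unfolding X_def M_def using im by measurable
  have distrX: "distr M borel (X i) = distr S borel (\<lambda>s. indicator D (fst s))" for i
  proof -
    have "distr M borel (X i) = distr (distr M S (\<lambda>\<omega>. \<omega> i)) borel (\<lambda>s. indicator D (fst s))"
      unfolding X_def M_def using im by (subst distr_distr) (auto simp: comp_def)
    also have "distr M S (\<lambda>\<omega>. \<omega> i) = S" unfolding M_def by (rule PS.PiM_component) simp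
    finally show ?thesis .
  qed
  have indep: "prob_space.indep_vars M (\<lambda>_. borel) X {..n}"
    unfolding X_def M_def
    using prob_space.indep_vars_compose2[OF Pmps coord_indep[OF S(1)], where Y="\<lambda>_ s. indicator D (fst s) :: real" and N="\<lambda>_. borel"] im
    by auto
  have expY: "(integral\<^sup>L M (X 0)) = measure G0 D"
  proof -
    have "(integral\<^sup>L M (X 0)) = integral\<^sup>L (distr M borel (X 0)) (\<lambda>x. x)"
      unfolding M_def using Xm[of 0] by (subst integral_distr) (auto simp: M_def)
    also have "\<dots> = integral\<^sup>L (distr S borel (\<lambda>s. indicator D (fst s))) (\<lambda>x. x)" by (simp add: distrX)
    also have "\<dots> = integral\<^sup>L S (\<lambda>s. indicator D (fst s))" using im by (subst integral_distr) auto
    also have "\<dots> = integral\<^sup>L (distr S borel fst) (indicator D)" using fstm D by (subst integral_distr) auto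
    also have "\<dots> = measure G0 D"
    proof -
      have "space G0 = UNIV" unfolding Sfst[symmetric] by simp
      then show ?thesis using Sfst D by simp
    qed
    finally show ?thesis .
  qed
  have sfc: "\<exists>A. countable A \<and> A \<subseteq> sets (PiM UNIV (\<lambda>_::nat. S)) \<and> \<Union>A = space (PiM UNIV (\<lambda>_::nat. S))"
    by (intro exI[of _ "{space (PiM UNIV (\<lambda>_::nat. S))}"]) auto
  interpret H: Hoeffding_ineq_iid M "{..n}" X "X 0" 0 1 "(integral\<^sup>L M (X 0))"
  proof unfold_locales
    show "finite {..n}" by simp
    show "prob_space.indep_vars M (\<lambda>_. borel) X {..n}" by (rule indep)
  next
    fix i show "distr M borel (X i) = distr M borel (X 0)" by (simp add: distrX)
  next
    show "X 0 \<in> borel_measurable M" by (rule Xm)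
    show "AE x in M. X 0 x \<in> {0..1}" unfolding X_def by simp
  qed (use sfc in \<open>simp_all add: M_def prob_space.emeasure_space_1[OF Pmps]\<close>)
  show ?thesis
    using H.Hoeffding_ineq_ge'[OF eta] expY unfolding M_def X_def by simp
qed

definition phi0 :: "real set \<Rightarrow> real set \<Rightarrow> (real \<times> real \<Rightarrow> real measure) \<Rightarrow> (real \<Rightarrow> real \<Rightarrow> real measure)
    \<Rightarrow> nat \<Rightarrow> (nat \<Rightarrow> real) \<Rightarrow> (nat \<Rightarrow> real) \<Rightarrow> nat" where
  "phi0 Theta Xs G F t xs ys =
     (if xs t \<in> Xs \<and> goodj Theta G t (dat t xs) \<noteq> {} then pref_arm F (Chat Theta G t (dat t xs)) (xs t) else 1)"

lemma Chat_in:
  assumes "goodj Theta G n l \<noteq> {}"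
  shows "Chat Theta G n l \<in> Theta \<times> Theta"
proof -
  have fin: "finite (goodj Theta G n l)" unfolding goodj_def by auto
  have "Max (goodj Theta G n l) \<in> goodj Theta G n l" using Max_in[OF fin assms] .
  then obtain C where "C \<in> Theta \<times> Theta" "Sfit G C n l (1 / real (Max (goodj Theta G n l)))"
    unfolding goodj_def by auto
  then show ?thesis unfolding Chat_def by (metis (mono_tags, lifting) someI)
qed

lemma mu_meas:
  assumes "(\<lambda>x. F \<theta> x) \<in> restrict_space borel Xs \<rightarrow>\<^sub>M prob_algebra borel"
  shows "(\<lambda>x. mu F \<theta> x) \<in> restrict_space borel Xs \<rightarrow>\<^sub>M borel"
proof -
  have "(\<lambda>M. integral\<^sup>L M (\<lambda>y::real. y)) \<in> subprob_algebra borel \<rightarrow>\<^sub>M borel"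
    by (rule integral_measurable_subprob_algebra) simp
  from measurable_compose[OF measurable_prob_algebraD[OF assms] this]
  show ?thesis unfolding mu_def by simp
qed

lemma pref_meas:
  assumes Xs: "Xs \<in> sets borel"
    and F1: "(\<lambda>x. F (fst C) x) \<in> restrict_space borel Xs \<rightarrow>\<^sub>M prob_algebra borel"
    and F2: "(\<lambda>x. F (snd C) x) \<in> restrict_space borel Xs \<rightarrow>\<^sub>M prob_algebra borel"
  shows "(\<lambda>x. if x \<in> Xs then pref_arm F C x else 1) \<in> borel \<rightarrow>\<^sub>M count_space UNIV"
proof (subst measurable_If_restrict_space_iff)
  show "{x \<in> space borel. x \<in> Xs} \<in> sets borel" using Xs by simp
  have m1[measurable]: "(\<lambda>x. mu F (fst C) x) \<in> restrict_space borel Xs \<rightarrow>\<^sub>M borel" by (rule mu_meas[where F=F and \<theta>="fst C", OF F1])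
  have m2[measurable]: "(\<lambda>x. mu F (snd C) x) \<in> restrict_space borel Xs \<rightarrow>\<^sub>M borel" by (rule mu_meas[where F=F and \<theta>="snd C", OF F2])
  have "(\<lambda>x. pref_arm F C x) \<in> restrict_space borel Xs \<rightarrow>\<^sub>M count_space UNIV"
    unfolding pref_arm_def by measurable
  then show "(\<lambda>x. pref_arm F C x) \<in> restrict_space borel {x. x \<in> Xs} \<rightarrow>\<^sub>M count_space UNIV \<and>
      (\<lambda>x. 1) \<in> restrict_space borel {x. x \<notin> Xs} \<rightarrow>\<^sub>M count_space UNIV" by simp
qed

lemma dat_meas: "dat t \<in> PiM UNIV (\<lambda>_::nat. (borel :: real measure)) \<rightarrow>\<^sub>M count_space UNIV"
proof (subst measurable_count_space_eq2_countable, safe)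
  fix a :: "int list"
  have eq: "dat t -` {a} \<inter> space (PiM UNIV (\<lambda>_::nat. (borel :: real measure))) =
     {xs \<in> space (PiM UNIV (\<lambda>_::nat. (borel :: real measure))). length a = Suc t \<and> (\<forall>i<Suc t. rd t (xs i) = a ! i)}"
    by (auto simp: dat_def list_eq_iff_nth_eq simp del: upt_Suc)
  show "dat t -` {a} \<inter> space (PiM UNIV (\<lambda>_::nat. (borel :: real measure))) \<in> sets (PiM UNIV (\<lambda>_::nat. (borel :: real measure)))"
    unfolding eq rd_def by measurable
qed auto

lemma phi0_alloc:
  assumes Xs: "Xs \<in> sets borel"
    and F_kernel: "\<And>\<theta>. \<theta> \<in> Theta \<Longrightarrow> (\<lambda>x. F \<theta> x) \<in> restrict_space borel Xs \<rightarrow>\<^sub>M prob_algebra borel"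
  shows "allocation_rule (phi0 Theta Xs G F)"
  unfolding allocation_rule_def
proof (intro conjI allI impI)
  fix t :: nat and xs ys :: "nat \<Rightarrow> real" show "phi0 Theta Xs G F t xs ys \<in> {1, 2}"
    unfolding phi0_def pref_arm_def by auto
next
  fix t :: nat and xs ys xs' ys' :: "nat \<Rightarrow> real"
  assume a: "(\<forall>i\<le>t. xs i = xs' i) \<and> (\<forall>i<t. ys i = ys' i)"
  then have "dat t xs = dat t xs'" unfolding dat_def by (auto simp del: upt_Suc)
  moreover have "xs t = xs' t" using a by auto
  ultimately show "phi0 Theta Xs G F t xs ys = phi0 Theta Xs G F t xs' ys'"
    unfolding phi0_def by simp
next
  fix t :: nat
  define h where "h = (\<lambda>(l::int list) (xs::nat \<Rightarrow> real).
      if xs t \<in> Xs \<and> goodj Theta G t l \<noteq> {} then pref_arm F (Chat Theta G t l) (xs t) else 1)"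
  have hm: "(\<lambda>xs. h l xs) \<in> PiM UNIV (\<lambda>_::nat. (borel :: real measure)) \<rightarrow>\<^sub>M count_space UNIV" for l
  proof (cases "goodj Theta G t l = {}")
    case True
    then show ?thesis unfolding h_def by simp
  next
    case False
    then have C: "Chat Theta G t l \<in> Theta \<times> Theta" by (rule Chat_in)
    have g: "(\<lambda>x. if x \<in> Xs then pref_arm F (Chat Theta G t l) x else 1) \<in> borel \<rightarrow>\<^sub>M count_space UNIV"
      using C by (intro pref_meas[OF Xs] F_kernel) auto
    have "(\<lambda>xs. h l xs) = (\<lambda>x. if x \<in> Xs then pref_arm F (Chat Theta G t l) x else 1) \<circ> (\<lambda>xs. xs t)"
      unfolding h_def using False by (auto simp: fun_eq_iff)
    also have "\<dots> \<in> PiM UNIV (\<lambda>_::nat. (borel :: real measure)) \<rightarrow>\<^sub>M count_space UNIV"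
      by (intro measurable_comp[OF _ g]) simp
    finally show ?thesis .
  qed
  have f: "(\<lambda>xs. h (dat t xs) xs) \<in> PiM UNIV (\<lambda>_::nat. (borel :: real measure)) \<rightarrow>\<^sub>M count_space UNIV"
    by (rule measurable_compose_countable[OF hm dat_meas])
  have "(\<lambda>(xs, ys). phi0 Theta Xs G F t xs ys) = (\<lambda>p. h (dat t (fst p)) (fst p))"
    unfolding h_def phi0_def by (auto simp: fun_eq_iff)
  also have "\<dots> \<in> (PiM UNIV (\<lambda>_::nat. borel) \<Otimes>\<^sub>M PiM UNIV (\<lambda>_::nat. borel)) \<rightarrow>\<^sub>M count_space UNIV"
    by (rule measurable_compose[OF measurable_fst f])
  finally show "(\<lambda>(xs, ys). phi0 Theta Xs G F t xs ys) \<in> (PiM UNIV (\<lambda>_::nat. borel) \<Otimes>\<^sub>M PiM UNIV (\<lambda>_::nat. borel)) \<rightarrow>\<^sub>M count_space UNIV" .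
qed

lemma length_acts_upto: "length (acts_upto phi \<omega> n) = n"
  by (induction n) (auto simp: Let_def)

lemma action_phi0: "action (phi0 Theta Xs G F) \<omega> t = phi0 Theta Xs G F t (\<lambda>i. fst (\<omega> i)) (\<lambda>_. 0)"
  unfolding action_def by (simp add: Let_def nth_append length_acts_upto phi0_def)

lemma key_step:
  fixes Theta Xs :: "real set" and G :: "real \<times> real \<Rightarrow> real measure" and F :: "real \<Rightarrow> real \<Rightarrow> real measure"
  assumes G_prob: "\<And>C. C \<in> Theta \<times> Theta \<Longrightarrow> prob_space (G C) \<and> sets (G C) = sets borel"
    and C0: "C0 \<in> Theta \<times> Theta"
    and sepC: "\<forall>Ce \<in> Theta \<times> Theta. (\<exists>x\<in>Xs. pref_arm F Ce x \<noteq> pref_arm F C0 x) \<longrightarrow> prohorov (G C0) (G Ce) \<ge> \<delta>"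
    and J: "1 \<le> J" "2 / real J < \<delta>" "J \<le> n"
    and w: "w = 1 / (2 * real J)" and hn: "1 / real (Suc n) \<le> w"
    and outsmall: "measure (G C0) {x. floor (x / w) \<notin> {- int N..int N}} \<le> w"
    and eta: "real (2*N+2) * eta \<le> w" "eta \<ge> 0"
    and cells: "\<And>j. j \<in> {- int N..int N} \<Longrightarrow>
        (\<Sum>i\<in>{..n}. indicator {x. floor (x / w) = j} (xs i)) / real (Suc n)
          < measure (G C0) {x. floor (x / w) = j} + eta"
    and outc: "(\<Sum>i\<in>{..n}. indicator {x. floor (x / w) \<notin> {- int N..int N}} (xs i)) / real (Suc n)
          < measure (G C0) {x. floor (x / w) \<notin> {- int N..int N}} + eta"
    and xn: "xs n \<in> Xs"
  shows "phi0 Theta Xs G F n xs ys = pref_arm F C0 (xs n)"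
proof -
  have G0p: "prob_space (G C0)" "sets (G C0) = sets borel" using G_prob[OF C0] by auto
  have wpos: "w > 0" using J w by simp
  have emp: "empL n (dat n xs) B \<le> measure (G C0) (thick B (2 * w)) + 2 * w" for B
    by (rule conc_det[OF G0p wpos hn outsmall eta cells outc])
  have cw: "2 * w = 1 / real J" using w by simp
  have fit: "Sfit G C0 n (dat n xs) (1 / real J)" unfolding Sfit_def using emp cw by simp
  have len: "length (dat n xs) > 0" by (simp add: dat_def)
  have c: "goodj Theta G n (dat n xs) \<noteq> {} \<and> Chat Theta G n (dat n xs) \<in> Theta \<times> Theta \<and>
         prohorov (G C0) (G (Chat Theta G n (dat n xs))) \<le> 2 / real J"
    by (rule core[OF C0 G_prob J(1) J(3) fit len])
  have "pref_arm F (Chat Theta G n (dat n xs)) (xs n) = pref_arm F C0 (xs n)"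
  proof (rule ccontr)
    assume "pref_arm F (Chat Theta G n (dat n xs)) (xs n) \<noteq> pref_arm F C0 (xs n)"
    then have "prohorov (G C0) (G (Chat Theta G n (dat n xs))) \<ge> \<delta>" using sepC c xn by (meson)
    then show False using c J by linarith
  qed
  then show ?thesis using c xn unfolding phi0_def by simp
qed

lemma exists_N:
  fixes G0 :: "real measure" and w :: real
  assumes G0: "prob_space G0" "sets G0 = sets borel" and w: "w > 0"
  shows "\<exists>N::nat. measure G0 {x. floor (x / w) \<notin> {- int N..int N}} \<le> w"
proof -
  interpret P: prob_space G0 by fact
  define Out where "Out = (\<lambda>N::nat. {x::real. floor (x / w) \<notin> {- int N..int N}})"
  have ob: "Out N \<in> sets borel" for N
  proof -
    have fm: "(\<lambda>x::real. floor (x / w)) \<in> borel \<rightarrow>\<^sub>M count_space UNIV" by measurable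
    have "Out N = (\<lambda>x::real. floor (x / w)) -` (- {- int N..int N}) \<inter> space borel" unfolding Out_def by auto
    then show ?thesis using measurable_sets[OF fm, of "- {- int N..int N}"] by simp
  qed
  have rs: "range Out \<subseteq> sets G0" using G0(2) ob by auto
  have dec: "decseq Out" unfolding decseq_def
  proof (intro allI impI subsetI)
    fix m n x assume "m \<le> n" "x \<in> Out n"
    then show "x \<in> Out m" unfolding Out_def by clarsimp
  qed
  have inter: "(\<Inter>i. Out i) = {}"
  proof safe
    fix x assume "x \<in> (\<Inter>i. Out i)"
    then have "x \<in> Out (nat \<bar>floor (x / w)\<bar>)" by blast
    then show "x \<in> {}" unfolding Out_def by auto
  qed
  have "(\<lambda>n. measure G0 (Out n)) \<longlonglongrightarrow> measure G0 (\<Inter>i. Out i)"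
    by (rule Lim_measure_decseq[OF rs dec]) (simp add: P.emeasure_eq_measure)
  then have "(\<lambda>n. measure G0 (Out n)) \<longlonglongrightarrow> 0" using inter by simp
  then have "eventually (\<lambda>n. measure G0 (Out n) < w) sequentially"
    using w by (rule order_tendstoD)
  then obtain N where "measure G0 (Out N) < w" using eventually_sequentially by auto
  then show ?thesis unfolding Out_def by (intro exI[of _ N]) simp
qed

lemma main_C0:
  fixes Theta Xs :: "real set"
    and G :: "real \<times> real \<Rightarrow> real measure"
    and F :: "real \<Rightarrow> real \<Rightarrow> real measure"
  assumes Xs_borel: "Xs \<in> sets borel"
    and G_prob: "\<And>C. C \<in> Theta \<times> Theta \<Longrightarrow> prob_space (G C) \<and> sets (G C) = sets borel"
    and G_on_Xs: "\<And>C. C \<in> Theta \<times> Theta \<Longrightarrow> emeasure (G C) Xs = 1"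
    and F_kernel: "\<And>\<theta>. \<theta> \<in> Theta \<Longrightarrow>
                     (\<lambda>x. F \<theta> x) \<in> restrict_space borel Xs \<rightarrow>\<^sub>M prob_algebra borel"
    and sep: "\<And>C0. C0 \<in> Theta \<times> Theta \<Longrightarrow>
               \<exists>\<delta>>0. \<forall>Ce \<in> Theta \<times> Theta. (\<exists>x\<in>Xs. pref_arm F Ce x \<noteq> pref_arm F C0 x)
                        \<longrightarrow> prohorov (G C0) (G Ce) \<ge> \<delta>"
    and C0: "C0 \<in> Theta \<times> Theta"
  shows "(\<exists>L::real. (\<lambda>t. \<integral>\<^sup>+\<omega>. ennreal (real (T_inf F C0 (phi0 Theta Xs G F) t \<omega>)) \<partial>Omega Xs G F C0)
                          \<longlonglongrightarrow> ennreal L) \<and>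
         (AE \<omega> in Omega Xs G F C0. convergent (\<lambda>t. real (T_inf F C0 (phi0 Theta Xs G F) t \<omega>)))"
proof -
  let ?phi = "phi0 Theta Xs G F"
  obtain \<delta> where \<delta>: "\<delta> > 0" and sepC: "\<forall>Ce \<in> Theta \<times> Theta. (\<exists>x\<in>Xs. pref_arm F Ce x \<noteq> pref_arm F C0 x)
                        \<longrightarrow> prohorov (G C0) (G Ce) \<ge> \<delta>"
    using sep[OF C0] by blast
  define G0 where "G0 = G C0"
  have G0p: "prob_space G0" "sets G0 = sets borel" using G_prob[OF C0] by (auto simp: G0_def)
  interpret P0: prob_space G0 by (rule G0p(1))
  have F1: "(\<lambda>x. F (fst C0) x) \<in> restrict_space borel Xs \<rightarrow>\<^sub>M prob_algebra borel"
    using C0 F_kernel by (cases C0) auto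
  have F2: "(\<lambda>x. F (snd C0) x) \<in> restrict_space borel Xs \<rightarrow>\<^sub>M prob_algebra borel"
    using C0 F_kernel by (cases C0) auto
  define S where "S = step_law Xs G F C0"
  have Sf: "prob_space S" "sets S = sets borel" "distr S borel fst = G0"
    using step_law_facts[OF Xs_borel _ _ F1 F2] G_prob[OF C0] by (auto simp: S_def G0_def)
  define M where "M = Omega Xs G F C0"
  have M_eq: "M = PiM UNIV (\<lambda>_::nat. S)" by (simp add: M_def Omega_def S_def)
  interpret PS: product_prob_space "\<lambda>_::nat. S" UNIV
    using Sf by (simp add: product_prob_space_def product_prob_space_axioms_def product_sigma_finite_def prob_space_imp_sigma_finite)
  have Mps: "prob_space M" unfolding M_eq using Sf(1) by (intro prob_space_PiM)
  interpret PM: prob_space M by (rule Mps)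
  have fstS[measurable]: "fst \<in> S \<rightarrow>\<^sub>M (borel :: real measure)"
    using Sf(2) by (simp cong: measurable_cong_sets add: borel_measurable_continuous_onI continuous_on_fst continuous_on_id)
  have compM[measurable]: "(\<lambda>\<omega>. \<omega> i) \<in> M \<rightarrow>\<^sub>M S" for i unfolding M_eq by simp

  obtain J0 :: nat where J0: "2 / \<delta> < real J0" using reals_Archimedean2 by blast
  define J where "J = Suc J0"
  have J: "1 \<le> J" "2 / real J < \<delta>"
  proof -
    show "1 \<le> J" by (simp add: J_def)
    have "2 / \<delta> < real J" using J0 by (simp add: J_def)
    moreover have "real J > 0" by (simp add: J_def)
    ultimately show "2 / real J < \<delta>" using \<delta> by (simp add: pos_divide_less_eq mult.commute pos_less_divide_eq)
  qed
  define w where "w = 1 / (2 * real J)"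
  have wpos: "w > 0" using J by (simp add: w_def)
  obtain N :: nat where N: "measure G0 {x. floor (x / w) \<notin> {- int N..int N}} \<le> w"
    using exists_N[OF G0p wpos] by blast
  define eta where "eta = w / real (2*N+2)"
  have eta: "eta > 0" "real (2*N+2) * eta \<le> w" using wpos by (auto simp: eta_def)
  define cell where "cell = (\<lambda>j::int. {x::real. floor (x / w) = j})"
  define K where "K = {- int N..int N}"
  define Out where "Out = {x::real. floor (x / w) \<notin> K}"
  define Ds where "Ds = insert Out (cell ` K)"
  have Ds_fin: "finite Ds" unfolding Ds_def K_def by simp
  have Ds_borel: "D \<in> sets borel" if "D \<in> Ds" for D
    using that unfolding Ds_def Out_def cell_def by (auto; measurable)
  define Bad where "Bad = (\<lambda>n D. {\<omega> \<in> space M. (\<Sum>i\<in>{..n}. indicator D (fst (\<omega> i))) / real (card {..n}) \<ge> measure G0 D + eta})"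
  define n0 where "n0 = J + nat (ceiling (1 / w))"

  have key: "action ?phi \<omega> n = pref_arm F C0 (fst (\<omega> n))"
    if n: "n0 \<le> n" and xn: "fst (\<omega> n) \<in> Xs" and nb: "\<forall>D\<in>Ds. \<omega> \<notin> Bad n D" and om: "\<omega> \<in> space M" for \<omega> n
  proof -
    define xs where "xs = (\<lambda>i. fst (\<omega> i))"
    have Jn: "J \<le> n" using n by (simp add: n0_def)
    have hn: "1 / real (Suc n) \<le> w"
    proof -
      have "1 / w \<le> real (nat (ceiling (1 / w)))" by linarith
      also have "\<dots> \<le> real n"
      proof -
        have "nat (ceiling (1 / w)) \<le> n" using n unfolding n0_def by linarith
        then show ?thesis by (rule of_nat_mono)
      qed
      finally have "1 / w < real (Suc n)" by simp
      then show ?thesis using wpos by (simp add: field_simps)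
    qed
    have cells: "(\<Sum>i\<in>{..n}. indicator {x. floor (x / w) = j} (xs i)) / real (Suc n)
          < measure (G C0) {x. floor (x / w) = j} + eta" if j: "j \<in> {- int N..int N}" for j
    proof -
      have "cell j \<in> Ds" using j unfolding Ds_def K_def by auto
      then have "\<omega> \<notin> Bad n (cell j)" using nb by blast
      then show ?thesis using om unfolding Bad_def cell_def xs_def G0_def by auto
    qed
    have outc: "(\<Sum>i\<in>{..n}. indicator {x. floor (x / w) \<notin> {- int N..int N}} (xs i)) / real (Suc n)
          < measure (G C0) {x. floor (x / w) \<notin> {- int N..int N}} + eta"
    proof -
      have "Out \<in> Ds" unfolding Ds_def by auto
      then have "\<omega> \<notin> Bad n Out" using nb by blast
      then show ?thesis using om unfolding Bad_def Out_def K_def xs_def G0_def by auto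
    qed
    have "phi0 Theta Xs G F n xs (\<lambda>_. 0) = pref_arm F C0 (xs n)"
      by (rule key_step[OF G_prob C0 sepC J Jn w_def hn N[unfolded G0_def] eta(2) less_imp_le[OF eta(1)] cells outc])
         (use xn in \<open>simp_all add: xs_def\<close>)
    then show ?thesis by (simp add: action_phi0 xs_def)
  qed

  have Bad_sets: "Bad n D \<in> sets M" if "D \<in> Ds" for n D
  proof -
    note Db[measurable] = Ds_borel[OF that]
    show ?thesis unfolding Bad_def by measurable
  qed
  have Bad_meas: "emeasure M (Bad n D) \<le> ennreal (exp (- 2 * real (Suc n) * eta\<^sup>2))" if "D \<in> Ds" for n D
  proof -
    have "measure M (Bad n D) \<le> exp (- 2 * real (card {..n}) * eta\<^sup>2 / (1 - 0)\<^sup>2)"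
      unfolding Bad_def M_eq by (rule hoeff_bound[OF Sf Ds_borel[OF that] less_imp_le[OF eta(1)]])
    then show ?thesis using PM.emeasure_eq_measure by simp
  qed
  have aeG: "AE x in G0. x \<in> Xs"
  proof -
    have "emeasure G0 Xs = 1" using G_on_Xs[OF C0] by (simp add: G0_def)
    then have "measure G0 Xs = 1" by (simp add: P0.emeasure_eq_measure)
    then show ?thesis using P0.AE_in_set_eq_1[of Xs] G0p(2) Xs_borel by simp
  qed
  have aeS: "AE s in S. fst s \<in> Xs"
  proof -
    have "AE x in distr S borel fst. x \<in> Xs" unfolding Sf(3) by (rule aeG)
    then show ?thesis using Xs_borel by (subst (asm) AE_distr_iff) auto
  qed
  have aeM: "AE \<omega> in M. \<forall>n. fst (\<omega> n) \<in> Xs"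
  proof (subst AE_all_countable, intro allI)
    fix n :: nat
    show "AE \<omega> in M. fst (\<omega> n) \<in> Xs"
      unfolding M_eq using PS.AE_component[where P="\<lambda>s. fst s \<in> Xs", OF UNIV_I aeS] by simp
  qed
  define g where "g = (\<lambda>n \<omega>. \<Sum>D\<in>Ds. indicator (Bad n D) \<omega> :: ennreal)"
  have gm[measurable]: "g n \<in> borel_measurable M" for n
    unfolding g_def using Bad_sets by (intro borel_measurable_sum) auto
  define q where "q = exp (- 2 * eta\<^sup>2)"
  have q: "0 < q" "q < 1" using eta by (auto simp: q_def)
  have gint: "integral\<^sup>N M (g n) \<le> ennreal (real (card Ds) * q ^ Suc n)" for n
  proof -
    have "integral\<^sup>N M (g n) = (\<Sum>D\<in>Ds. emeasure M (Bad n D))"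
      unfolding g_def using Bad_sets by (subst nn_integral_sum) auto
    also have "\<dots> \<le> (\<Sum>D\<in>Ds. ennreal (q ^ Suc n))"
    proof (intro sum_mono)
      fix D assume "D \<in> Ds"
      moreover have "exp (- 2 * real (Suc n) * eta\<^sup>2) = q ^ Suc n"
        unfolding q_def exp_of_nat_mult[symmetric] by (simp add: algebra_simps)
      ultimately show "emeasure M (Bad n D) \<le> ennreal (q ^ Suc n)" using Bad_meas by metis
    qed
    also have "\<dots> = ennreal (real (card Ds) * q ^ Suc n)"
      using q by (simp add: ennreal_mult ennreal_of_nat_eq_real_of_nat)
    finally show ?thesis .
  qed
  have summ: "summable (\<lambda>n. real (card Ds) * q ^ Suc n)"
  proof -
    have "summable (\<lambda>n. q ^ n)" using q by (intro summable_geometric) simp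
    then have "summable (\<lambda>n. real (card Ds) * q * q ^ n)" by (rule summable_mult)
    then show ?thesis by (simp add: mult.assoc)
  qed
  have sumfin: "(\<Sum>n. ennreal (real (card Ds) * q ^ Suc n)) \<noteq> \<top>"
    by (rule ennreal_suminf_neq_top[OF summ]) (use q in auto)
  have sumg: "(\<Sum>n. integral\<^sup>N M (g n)) \<noteq> \<top>"
  proof -
    have "(\<Sum>n. integral\<^sup>N M (g n)) \<le> (\<Sum>n. ennreal (real (card Ds) * q ^ Suc n))"
      by (intro suminf_le gint summableI)
    then show ?thesis using sumfin by (auto simp: top_unique)
  qed
  define Bf where "Bf = (\<lambda>\<omega>. of_nat n0 + (\<Sum>n. g n \<omega>))"
  have Bfm: "Bf \<in> borel_measurable M" unfolding Bf_def by measurable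
  have intBf: "integral\<^sup>N M Bf = of_nat n0 + (\<Sum>n. integral\<^sup>N M (g n))"
    unfolding Bf_def
    by (subst nn_integral_add) (auto simp: nn_integral_suminf PM.emeasure_space_1)
  have intBf_fin: "integral\<^sup>N M Bf \<noteq> \<top>" using sumg by (simp add: intBf)
  have pw: "ennreal (real (T_inf F C0 ?phi t \<omega>)) \<le> Bf \<omega>"
    if om: "\<omega> \<in> space M" and xsin: "\<forall>n. fst (\<omega> n) \<in> Xs" for \<omega> t
  proof -
    define A where "A = {\<tau>. \<tau> < t \<and> action ?phi \<omega> \<tau> \<noteq> pref_arm F C0 (fst (\<omega> \<tau>))}"
    define A2 where "A2 = {\<tau>\<in>{..<t}. \<exists>D\<in>Ds. \<omega> \<in> Bad \<tau> D}"
    have sub: "A \<subseteq> {..<n0} \<union> A2"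
    proof
      fix \<tau> assume "\<tau> \<in> A"
      then have "\<tau> < t" "action ?phi \<omega> \<tau> \<noteq> pref_arm F C0 (fst (\<omega> \<tau>))" unfolding A_def by auto
      then show "\<tau> \<in> {..<n0} \<union> A2" using key[of \<tau> \<omega>] om xsin unfolding A2_def by force
    qed
    have fA2: "finite A2" unfolding A2_def by simp
    have "card A \<le> card ({..<n0} \<union> A2)" using sub fA2 by (intro card_mono) auto
    also have "\<dots> \<le> n0 + card A2" using card_Un_le[of "{..<n0}" A2] by simp
    finally have cA: "card A \<le> n0 + card A2" .
    have "of_nat (card A2) = (\<Sum>\<tau>\<in>A2. (1::ennreal))" by simp
    also have "\<dots> \<le> (\<Sum>\<tau>\<in>A2. g \<tau> \<omega>)"
    proof (intro sum_mono)
      fix \<tau> assume "\<tau> \<in> A2"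
      then obtain D where D: "D \<in> Ds" "\<omega> \<in> Bad \<tau> D" unfolding A2_def by auto
      have "indicator (Bad \<tau> D) \<omega> \<le> g \<tau> \<omega>"
        unfolding g_def using Ds_fin D(1) by (intro member_le_sum) auto
      then show "1 \<le> g \<tau> \<omega>" using D(2) by simp
    qed
    also have "\<dots> \<le> (\<Sum>\<tau>\<in>{..<t}. g \<tau> \<omega>)"
      by (intro sum_mono2) (auto simp: A2_def)
    also have "\<dots> \<le> (\<Sum>n. g n \<omega>)" by (intro sum_le_suminf summableI) auto
    finally have c2: "of_nat (card A2) \<le> (\<Sum>n. g n \<omega>)" .
    have "ennreal (real (T_inf F C0 ?phi t \<omega>)) = of_nat (card A)"
      unfolding T_inf_def A_def by (simp add: ennreal_of_nat_eq_real_of_nat)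
    also have "\<dots> \<le> of_nat (n0 + card A2)" using cA by (rule of_nat_mono)
    also have "\<dots> = of_nat n0 + of_nat (card A2)" by (rule of_nat_add)
    also have "\<dots> \<le> Bf \<omega>" unfolding Bf_def using c2 by (intro add_left_mono)
    finally show ?thesis .
  qed
  have aeB: "AE \<omega> in M. \<forall>t. ennreal (real (T_inf F C0 ?phi t \<omega>)) \<le> Bf \<omega>"
  proof -
    have "AE \<omega> in M. (\<forall>n. fst (\<omega> n) \<in> Xs) \<longrightarrow> (\<forall>t. ennreal (real (T_inf F C0 ?phi t \<omega>)) \<le> Bf \<omega>)"
      by (rule AE_I2) (auto intro: pw)
    then show ?thesis using aeM by eventually_elim auto
  qed
  have incT: "T_inf F C0 ?phi t \<omega> \<le> T_inf F C0 ?phi t' \<omega>" if "t \<le> t'" for t t' \<omega>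
    unfolding T_inf_def using that by (intro card_mono) auto
  define f where "f = (\<lambda>t. \<integral>\<^sup>+\<omega>. ennreal (real (T_inf F C0 ?phi t \<omega>)) \<partial>M)"
  have finc: "incseq f" unfolding incseq_def f_def
    by (auto intro!: nn_integral_mono ennreal_leI incT)
  have fB: "f t \<le> integral\<^sup>N M Bf" for t
    unfolding f_def
  proof (rule nn_integral_mono_AE)
    show "AE x in M. ennreal (real (T_inf F C0 ?phi t x)) \<le> Bf x"
      using aeB by eventually_elim auto
  qed
  have lim: "f \<longlonglongrightarrow> (SUP t. f t)" by (rule LIMSEQ_SUP[OF finc])
  have supfin: "(SUP t. f t) < \<top>"
  proof -
    have "(SUP t. f t) \<le> integral\<^sup>N M Bf" by (intro SUP_least fB)
    then show ?thesis using intBf_fin by (simp add: less_top top_unique)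
  qed
  have part1: "\<exists>L::real. f \<longlonglongrightarrow> ennreal L"
    by (intro exI[of _ "enn2real (SUP t. f t)"]) (use lim supfin in simp)
  have aeBf: "AE \<omega> in M. Bf \<omega> \<noteq> \<top>" using nn_integral_PInf_AE[OF Bfm] intBf_fin by simp
  have part2: "AE \<omega> in M. convergent (\<lambda>t. real (T_inf F C0 ?phi t \<omega>))"
    using aeB aeBf
  proof eventually_elim
    case (elim \<omega>)
    have b: "real (T_inf F C0 ?phi t \<omega>) \<le> enn2real (Bf \<omega>)" for t
    proof -
      have "enn2real (ennreal (real (T_inf F C0 ?phi t \<omega>))) \<le> enn2real (Bf \<omega>)"
        using elim by (intro enn2real_mono) (auto simp: less_top)
      then show ?thesis by simp
    qed
    have "Bseq (\<lambda>t. real (T_inf F C0 ?phi t \<omega>))"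
      by (rule BseqI'[of _ "enn2real (Bf \<omega>)"]) (use b in simp)
    moreover have "monoseq (\<lambda>t. real (T_inf F C0 ?phi t \<omega>))"
      by (intro incseq_imp_monoseq) (auto simp: incseq_def incT)
    ultimately show ?case by (rule Bseq_monoseq_convergent)
  qed
  show ?thesis using part1 part2 unfolding f_def M_def by simp
qed

theorem theorem3:
  fixes Theta Xs :: "real set"
    and G :: "real \<times> real \<Rightarrow> real measure"
    and F :: "real \<Rightarrow> real \<Rightarrow> real measure"
  assumes Xs_borel: "Xs \<in> sets borel"
    and G_prob: "\<And>C. C \<in> Theta \<times> Theta \<Longrightarrow> prob_space (G C) \<and> sets (G C) = sets borel"
    and G_on_Xs: "\<And>C. C \<in> Theta \<times> Theta \<Longrightarrow> emeasure (G C) Xs = 1"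
    and F_kernel: "\<And>\<theta>. \<theta> \<in> Theta \<Longrightarrow>
                     (\<lambda>x. F \<theta> x) \<in> restrict_space borel Xs \<rightarrow>\<^sub>M prob_algebra borel"
    and F_mean: "\<And>\<theta> x. \<theta> \<in> Theta \<Longrightarrow> x \<in> Xs \<Longrightarrow> integrable (F \<theta> x) (\<lambda>y. y)"
    and ident: "\<And>C1 C2. C1 \<in> Theta \<times> Theta \<Longrightarrow> C2 \<in> Theta \<times> Theta \<Longrightarrow>
                   G C1 = G C2 \<longleftrightarrow> C1 = C2"
    and sep: "\<And>C0. C0 \<in> Theta \<times> Theta \<Longrightarrow>
               \<exists>\<delta>>0. \<forall>Ce \<in> Theta \<times> Theta. (\<exists>x\<in>Xs. pref_arm F Ce x \<noteq> pref_arm F C0 x)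
                        \<longrightarrow> prohorov (G C0) (G Ce) \<ge> \<delta>"
  shows "\<exists>phi. allocation_rule phi \<and>
           (\<forall>C0 \<in> Theta \<times> Theta.
              (\<exists>L::real. (\<lambda>t. \<integral>\<^sup>+\<omega>. ennreal (real (T_inf F C0 phi t \<omega>)) \<partial>Omega Xs G F C0)
                          \<longlonglongrightarrow> ennreal L) \<and>
              (AE \<omega> in Omega Xs G F C0. convergent (\<lambda>t. real (T_inf F C0 phi t \<omega>))))"
  proof -
  have "allocation_rule (phi0 Theta Xs G F)" by (rule phi0_alloc[OF Xs_borel F_kernel])
  moreover have "\<forall>C0 \<in> Theta \<times> Theta.
              (\<exists>L::real. (\<lambda>t. \<integral>\<^sup>+\<omega>. ennreal (real (T_inf F C0 (phi0 Theta Xs G F) t \<omega>)) \<partial>Omega Xs G F C0)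
                          \<longlonglongrightarrow> ennreal L) \<and>
              (AE \<omega> in Omega Xs G F C0. convergent (\<lambda>t. real (T_inf F C0 (phi0 Theta Xs G F) t \<omega>)))"
    using main_C0[OF Xs_borel G_prob G_on_Xs F_kernel sep] by blast
  ultimately show ?thesis by blast
qed

end
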